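(* Let $(E,C)$ be a configuration structure that is closed under nonempty intersections. Then: (1) $C$ is closed under directed unions iff $(E,C)$ has finite conflict; (2) $C$ is weakly coherent iff $(E,C)$ is rooted and has binary conflict; (3) $C$ is closed under finitely compatible unions iff it is closed under finitely consistent unions; (4) $C$ is coherent iff $(E,C)$ is rooted and $C$ is closed under pairwise consistent unions.
   Context: $C\subseteq\mathcal{P}(E)$. $X$ is consistent if $X\subseteq z$ for some $z\in C$; finitely (pairwise) consistent if all its finite subsets (subsets of size $\le2$) are consistent. Closed under nonempty intersections: $\emptyset\ne A\subseteq C\Rightarrow\bigcap A\in C$. Rooted: $\emptyset\in C$. Finite conflict: every $X\subseteq E$ such that each finite $Y\subseteq X$ satisfies $Y\subseteq z\subseteq X$ for some $z\in C$ belongs to $C$; binary conflict: same with $|Y|\le 2$. Closed under directed unions: for every nonempty $A\subseteq C$ such that for all $x,y\in A$ there is $z\in A$ with $x\cup y\subseteq z$, $\bigcup A\in C$. Weakly coherent: for every $A\subseteq C$ such that for all $x,y\in A$ there is $z\in C$ with $x\cup y\subseteq z\subseteq\bigcup A$, $\bigcup A\in C$. Closed under finitely compatible unions: $A\subseteq C$ and $\bigcup F$ consistent for every finite $F\subseteq A$ imply $\bigcup A\in C$. Coherent: $A\subseteq C$ and $x\cup y$ consistent for all $x,y\in A$ imply $\bigcup A\in C$. Closed under finitely (pairwise) consistent unions: $A\subseteq C$ with $\bigcup A$ finitely (pairwise) consistent implies $\bigcup A\in C$. *)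

theory Defs
  imports Main
begin

definition config_structure :: "'e set \<Rightarrow> 'e set set \<Rightarrow> bool" where
  "config_structure E C \<longleftrightarrow> C \<subseteq> Pow E"

definition consistent :: "'e set set \<Rightarrow> 'e set \<Rightarrow> bool" where
  "consistent C X \<longleftrightarrow> (\<exists>z\<in>C. X \<subseteq> z)"

definition fin_consistent :: "'e set set \<Rightarrow> 'e set \<Rightarrow> bool" where
  "fin_consistent C X \<longleftrightarrow> (\<forall>Y. Y \<subseteq> X \<and> finite Y \<longrightarrow> consistent C Y)"

definition pw_consistent :: "'e set set \<Rightarrow> 'e set \<Rightarrow> bool" where
  "pw_consistent C X \<longleftrightarrow> (\<forall>Y. Y \<subseteq> X \<and> finite Y \<and> card Y \<le> 2 \<longrightarrow> consistent C Y)"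

definition closed_ne_inter :: "'e set set \<Rightarrow> bool" where
  "closed_ne_inter C \<longleftrightarrow> (\<forall>A. A \<noteq> {} \<and> A \<subseteq> C \<longrightarrow> \<Inter>A \<in> C)"

definition rooted :: "'e set set \<Rightarrow> bool" where
  "rooted C \<longleftrightarrow> {} \<in> C"

definition finite_conflict :: "'e set \<Rightarrow> 'e set set \<Rightarrow> bool" where
  "finite_conflict E C \<longleftrightarrow>
     (\<forall>X. X \<subseteq> E \<and> (\<forall>Y. Y \<subseteq> X \<and> finite Y \<longrightarrow> (\<exists>z\<in>C. Y \<subseteq> z \<and> z \<subseteq> X)) \<longrightarrow> X \<in> C)"

definition binary_conflict :: "'e set \<Rightarrow> 'e set set \<Rightarrow> bool" where
  "binary_conflict E C \<longleftrightarrow>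
     (\<forall>X. X \<subseteq> E \<and> (\<forall>Y. Y \<subseteq> X \<and> finite Y \<and> card Y \<le> 2 \<longrightarrow> (\<exists>z\<in>C. Y \<subseteq> z \<and> z \<subseteq> X)) \<longrightarrow> X \<in> C)"

definition closed_directed_unions :: "'e set set \<Rightarrow> bool" where
  "closed_directed_unions C \<longleftrightarrow>
     (\<forall>A. A \<noteq> {} \<and> A \<subseteq> C \<and> (\<forall>x\<in>A. \<forall>y\<in>A. \<exists>z\<in>A. x \<union> y \<subseteq> z) \<longrightarrow> \<Union>A \<in> C)"

definition weakly_coherent :: "'e set set \<Rightarrow> bool" where
  "weakly_coherent C \<longleftrightarrow>
     (\<forall>A. A \<subseteq> C \<and> (\<forall>x\<in>A. \<forall>y\<in>A. \<exists>z\<in>C. x \<union> y \<subseteq> z \<and> z \<subseteq> \<Union>A) \<longrightarrow> \<Union>A \<in> C)"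

definition closed_fin_compatible_unions :: "'e set set \<Rightarrow> bool" where
  "closed_fin_compatible_unions C \<longleftrightarrow>
     (\<forall>A. A \<subseteq> C \<and> (\<forall>F. F \<subseteq> A \<and> finite F \<longrightarrow> consistent C (\<Union>F)) \<longrightarrow> \<Union>A \<in> C)"

definition coherent :: "'e set set \<Rightarrow> bool" where
  "coherent C \<longleftrightarrow>
     (\<forall>A. A \<subseteq> C \<and> (\<forall>x\<in>A. \<forall>y\<in>A. consistent C (x \<union> y)) \<longrightarrow> \<Union>A \<in> C)"

definition closed_fin_consistent_unions :: "'e set set \<Rightarrow> bool" where
  "closed_fin_consistent_unions C \<longleftrightarrow>
     (\<forall>A. A \<subseteq> C \<and> fin_consistent C (\<Union>A) \<longrightarrow> \<Union>A \<in> C)"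

definition closed_pw_consistent_unions :: "'e set set \<Rightarrow> bool" where
  "closed_pw_consistent_unions C \<longleftrightarrow>
     (\<forall>A. A \<subseteq> C \<and> pw_consistent C (\<Union>A) \<longrightarrow> \<Union>A \<in> C)"

end

theory Submission
  imports Defs
begin

definition cl :: "'e set set \<Rightarrow> 'e set \<Rightarrow> 'e set" where
  "cl C Y = \<Inter>{z\<in>C. Y \<subseteq> z}"

lemma cl_in: assumes "closed_ne_inter C" "consistent C Y" shows "cl C Y \<in> C"
proof -
  have ne: "{z\<in>C. Y \<subseteq> z} \<noteq> {}" using assms(2) unfolding consistent_def by auto
  have "{z\<in>C. Y \<subseteq> z} \<subseteq> C" by auto
  then show ?thesis using ne assms(1) unfolding closed_ne_inter_def cl_def by simp
qed

lemma cl_sup: "Y \<subseteq> cl C Y"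
  unfolding cl_def by blast

lemma cl_min: "z \<in> C \<Longrightarrow> Y \<subseteq> z \<Longrightarrow> cl C Y \<subseteq> z"
  unfolding cl_def by blast

lemma card2_cases:
  assumes "finite Y" "card Y \<le> 2"
  shows "Y = {} \<or> (\<exists>a. Y = {a}) \<or> (\<exists>a b. Y = {a,b})"
proof -
  have "card Y = 0 \<or> card Y = 1 \<or> card Y = 2" using assms(2) by linarith
  moreover have "card Y = 0 \<Longrightarrow> Y = {}" using assms(1) by simp
  moreover have "card Y = 1 \<Longrightarrow> \<exists>a. Y = {a}" by (simp add: card_1_singleton_iff)
  moreover have "card Y = 2 \<Longrightarrow> \<exists>a b. Y = {a,b}" by (metis card_2_iff)
  ultimately show ?thesis by blast
qed

lemma finite_cover:
  assumes "finite Y" "Y \<subseteq> \<Union>A"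
  shows "\<exists>F. F \<subseteq> A \<and> finite F \<and> Y \<subseteq> \<Union>F"
  using assms
proof (induction Y rule: finite_induct)
  case empty then show ?case by blast
next
  case (insert x Y)
  then obtain F where F: "F \<subseteq> A" "finite F" "Y \<subseteq> \<Union>F" by auto
  obtain a where a: "a \<in> A" "x \<in> a" using insert(4) by auto
  have "insert a F \<subseteq> A" "finite (insert a F)" "insert x Y \<subseteq> \<Union>(insert a F)" using F a by auto
  then show ?case by blast
qed

lemma directed_cover:
  assumes "finite Y" "Y \<subseteq> \<Union>A" "A \<noteq> {}" "\<forall>x\<in>A. \<forall>y\<in>A. \<exists>z\<in>A. x \<union> y \<subseteq> z"
  shows "\<exists>z\<in>A. Y \<subseteq> z"
  using assms
proof (induction Y rule: finite_induct)
  case empty then show ?case by blast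
next
  case (insert x Y)
  then obtain z where z: "z \<in> A" "Y \<subseteq> z" by auto
  obtain a where a: "a \<in> A" "x \<in> a" using insert(4) by auto
  obtain w where w: "w \<in> A" "a \<union> z \<subseteq> w" using insert(6) z a by meson
  have "insert x Y \<subseteq> w" using w z a by auto
  then show ?case using w by blast
qed

lemma part1:
  assumes cs: "config_structure E C" and ci: "closed_ne_inter C"
  shows "closed_directed_unions C \<longleftrightarrow> finite_conflict E C"
proof
  assume d: "closed_directed_unions C"
  show "finite_conflict E C" unfolding finite_conflict_def
  proof (intro allI impI, elim conjE)
    fix X assume XE: "X \<subseteq> E" and H: "\<forall>Y. Y \<subseteq> X \<and> finite Y \<longrightarrow> (\<exists>z\<in>C. Y \<subseteq> z \<and> z \<subseteq> X)"
    define A where "A = {cl C Y | Y. finite Y \<and> Y \<subseteq> X}"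
    have sub: "cl C Y \<in> C \<and> cl C Y \<subseteq> X" if "finite Y" "Y \<subseteq> X" for Y
    proof -
      have "\<exists>z\<in>C. Y \<subseteq> z \<and> z \<subseteq> X" using H[rule_format, of Y] that by simp
      then obtain z where z: "z \<in> C" "Y \<subseteq> z" "z \<subseteq> X" by blast
      hence "consistent C Y" unfolding consistent_def by blast
      hence "cl C Y \<in> C" using cl_in[OF ci] by blast
      moreover have "cl C Y \<subseteq> X" using cl_min[OF z(1,2)] z(3) by blast
      ultimately show ?thesis by blast
    qed
    have "cl C {} \<in> A" unfolding A_def by auto
    hence "A \<noteq> {}" by blast
    moreover have "A \<subseteq> C"
    proof
      fix a assume "a \<in> A"
      then obtain Y where "finite Y" "Y \<subseteq> X" "a = cl C Y" unfolding A_def by auto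
      thus "a \<in> C" using sub by blast
    qed
    moreover have "\<forall>x\<in>A. \<forall>y\<in>A. \<exists>z\<in>A. x \<union> y \<subseteq> z"
    proof (intro ballI)
      fix x y assume "x \<in> A" "y \<in> A"
      obtain Y1 where Y1: "finite Y1" "Y1 \<subseteq> X" "x = cl C Y1" using \<open>x \<in> A\<close> unfolding A_def by auto
      obtain Y2 where Y2: "finite Y2" "Y2 \<subseteq> X" "y = cl C Y2" using \<open>y \<in> A\<close> unfolding A_def by auto
      note Y = Y1 Y2
      have "cl C (Y1 \<union> Y2) \<in> A" unfolding A_def using Y by blast
      moreover have "x \<union> y \<subseteq> cl C (Y1 \<union> Y2)"
      proof -
        have c: "cl C (Y1 \<union> Y2) \<in> C" using Y sub[of "Y1 \<union> Y2"] by blast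
        have s: "Y1 \<union> Y2 \<subseteq> cl C (Y1 \<union> Y2)" by (rule cl_sup)
        have "cl C Y1 \<subseteq> cl C (Y1 \<union> Y2)" using cl_min[OF c] s by blast
        moreover have "cl C Y2 \<subseteq> cl C (Y1 \<union> Y2)" using cl_min[OF c] s by blast
        ultimately show ?thesis using Y by blast
      qed
      ultimately show "\<exists>z\<in>A. x \<union> y \<subseteq> z" by blast
    qed
    ultimately have "\<Union>A \<in> C" using d[unfolded closed_directed_unions_def, rule_format, of A] by blast
    moreover have "\<Union>A = X"
    proof
      show "\<Union>A \<subseteq> X"
      proof
        fix e assume "e \<in> \<Union>A"
        then obtain a where "a \<in> A" "e \<in> a" by auto
        then obtain Y where "finite Y" "Y \<subseteq> X" "a = cl C Y" unfolding A_def by auto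
        thus "e \<in> X" using sub \<open>e \<in> a\<close> by blast
      qed
      show "X \<subseteq> \<Union>A"
      proof
        fix e assume "e \<in> X"
        hence "cl C {e} \<in> A" unfolding A_def by auto
        thus "e \<in> \<Union>A" using cl_sup[of "{e}" C] by blast
      qed
    qed
    ultimately show "X \<in> C" by simp
  qed
next
  assume f: "finite_conflict E C"
  show "closed_directed_unions C" unfolding closed_directed_unions_def
  proof (intro allI impI, elim conjE)
    fix A assume ne: "A \<noteq> {}" and AC: "A \<subseteq> C" and dir: "\<forall>x\<in>A. \<forall>y\<in>A. \<exists>z\<in>A. x \<union> y \<subseteq> z"
    have "\<Union>A \<subseteq> E" using AC cs unfolding config_structure_def by blast
    moreover have "\<forall>Y. Y \<subseteq> \<Union>A \<and> finite Y \<longrightarrow> (\<exists>z\<in>C. Y \<subseteq> z \<and> z \<subseteq> \<Union>A)"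
    proof (intro allI impI, elim conjE)
      fix Y assume "Y \<subseteq> \<Union>A" "finite Y"
      then obtain z where "z \<in> A" "Y \<subseteq> z" using directed_cover[of Y A] ne dir by blast
      thus "\<exists>z\<in>C. Y \<subseteq> z \<and> z \<subseteq> \<Union>A" using AC by blast
    qed
    ultimately show "\<Union>A \<in> C" using f[unfolded finite_conflict_def, rule_format, of "\<Union>A"] by blast
  qed
qed

lemma part2:
  assumes cs: "config_structure E C" and ci: "closed_ne_inter C"
  shows "weakly_coherent C \<longleftrightarrow> (rooted C \<and> binary_conflict E C)"
proof
  assume w: "weakly_coherent C"
  have "\<Union>{} \<in> C" using w[unfolded weakly_coherent_def, rule_format, of "{}"] by simp
  hence r: "rooted C" unfolding rooted_def by simp
  have "binary_conflict E C" unfolding binary_conflict_def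
  proof (intro allI impI, elim conjE)
    fix X assume XE: "X \<subseteq> E" and H: "\<forall>Y. Y \<subseteq> X \<and> finite Y \<and> card Y \<le> 2 \<longrightarrow> (\<exists>z\<in>C. Y \<subseteq> z \<and> z \<subseteq> X)"
    define A where "A = (\<lambda>e. cl C {e}) ` X"
    have sub: "cl C {e} \<in> C \<and> cl C {e} \<subseteq> X" if "e \<in> X" for e
    proof -
      have "{e} \<subseteq> X" "finite {e}" "card {e} \<le> 2" using that by auto
      hence "\<exists>z\<in>C. {e} \<subseteq> z \<and> z \<subseteq> X" using H[rule_format, of "{e}"] by simp
      then obtain z where z: "z \<in> C" "{e} \<subseteq> z" "z \<subseteq> X" by blast
      hence "consistent C {e}" unfolding consistent_def by blast
      hence "cl C {e} \<in> C" using cl_in[OF ci] by blast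
      moreover have "cl C {e} \<subseteq> X" using cl_min[OF z(1,2)] z(3) by blast
      ultimately show ?thesis by blast
    qed
    have UA: "\<Union>A = X"
    proof
      show "\<Union>A \<subseteq> X" unfolding A_def using sub by auto
      show "X \<subseteq> \<Union>A" unfolding A_def using cl_sup[of _ C] by auto
    qed
    have "A \<subseteq> C" unfolding A_def using sub by auto
    moreover have "\<forall>x\<in>A. \<forall>y\<in>A. \<exists>z\<in>C. x \<union> y \<subseteq> z \<and> z \<subseteq> \<Union>A"
    proof (intro ballI)
      fix x y assume "x \<in> A" "y \<in> A"
      then obtain a b where ab: "a \<in> X" "b \<in> X" "x = cl C {a}" "y = cl C {b}" unfolding A_def by auto
      have "card {a,b} \<le> 2" by (simp add: card_insert_le_m1)
      hence "\<exists>z\<in>C. {a,b} \<subseteq> z \<and> z \<subseteq> X" using H[rule_format, of "{a,b}"] ab by simp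
      then obtain z where z: "z \<in> C" "{a,b} \<subseteq> z" "z \<subseteq> X" by blast
      have "cl C {a} \<subseteq> z" "cl C {b} \<subseteq> z" using cl_min[OF z(1)] z(2) by auto
      hence "x \<union> y \<subseteq> z" using ab by simp
      thus "\<exists>z\<in>C. x \<union> y \<subseteq> z \<and> z \<subseteq> \<Union>A" using UA z by blast
    qed
    ultimately have "\<Union>A \<in> C" using w[unfolded weakly_coherent_def, rule_format, of A] by blast
    thus "X \<in> C" using UA by simp
  qed
  with r show "rooted C \<and> binary_conflict E C" by blast
next
  assume "rooted C \<and> binary_conflict E C"
  hence r: "{} \<in> C" and b: "binary_conflict E C" unfolding rooted_def by auto
  show "weakly_coherent C" unfolding weakly_coherent_def
  proof (intro allI impI, elim conjE)
    fix A assume AC: "A \<subseteq> C" and H: "\<forall>x\<in>A. \<forall>y\<in>A. \<exists>z\<in>C. x \<union> y \<subseteq> z \<and> z \<subseteq> \<Union>A"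
    have "\<Union>A \<subseteq> E" using AC cs unfolding config_structure_def by blast
    moreover have "\<forall>Y. Y \<subseteq> \<Union>A \<and> finite Y \<and> card Y \<le> 2 \<longrightarrow> (\<exists>z\<in>C. Y \<subseteq> z \<and> z \<subseteq> \<Union>A)"
    proof (intro allI impI, elim conjE)
      fix Y assume Y: "Y \<subseteq> \<Union>A" "finite Y" "card Y \<le> 2"
      from card2_cases[OF Y(2,3)] show "\<exists>z\<in>C. Y \<subseteq> z \<and> z \<subseteq> \<Union>A"
      proof (elim disjE exE)
        assume "Y = {}" thus ?thesis using r by blast
      next
        fix a assume "Y = {a}" thus ?thesis using Y AC by blast
      next
        fix a b assume Yab: "Y = {a,b}"
        then obtain x y where "x \<in> A" "y \<in> A" "a \<in> x" "b \<in> y" using Y by blast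
        then obtain z where "z \<in> C" "x \<union> y \<subseteq> z" "z \<subseteq> \<Union>A" using H by meson
        thus ?thesis using Yab \<open>a \<in> x\<close> \<open>b \<in> y\<close> by blast
      qed
    qed
    ultimately show "\<Union>A \<in> C" using b[unfolded binary_conflict_def, rule_format, of "\<Union>A"] by blast
  qed
qed

lemma fc_consistent:
  assumes ci: "closed_ne_inter C" and cu: "closed_fin_compatible_unions C"
    and fc: "fin_consistent C X"
  shows "consistent C X"
proof -
  define A where "A = cl C ` {Y. finite Y \<and> Y \<subseteq> X}"
  have "A \<subseteq> C"
  proof
    fix a assume "a \<in> A"
    then obtain Y where Y: "finite Y" "Y \<subseteq> X" "a = cl C Y" unfolding A_def by auto
    hence "consistent C Y" using fc[unfolded fin_consistent_def, rule_format, of Y] by simp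
    thus "a \<in> C" using cl_in[OF ci] Y by simp
  qed
  moreover have "\<forall>F. F \<subseteq> A \<and> finite F \<longrightarrow> consistent C (\<Union>F)"
  proof (intro allI impI, elim conjE)
    fix F assume "F \<subseteq> A" "finite F"
    then obtain S where S: "S \<subseteq> {Y. finite Y \<and> Y \<subseteq> X}" "finite S" "F = cl C ` S"
      unfolding A_def by (meson finite_subset_image)
    have fin: "finite (\<Union>S)" "\<Union>S \<subseteq> X" using S by auto
    hence cons: "consistent C (\<Union>S)" using fc[unfolded fin_consistent_def, rule_format, of "\<Union>S"] by simp
    hence inC: "cl C (\<Union>S) \<in> C" using cl_in[OF ci] by blast
    have "\<Union>F \<subseteq> cl C (\<Union>S)"
    proof
      fix e assume "e \<in> \<Union>F"
      then obtain Y where "Y \<in> S" "e \<in> cl C Y" using S by blast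
      moreover have "cl C Y \<subseteq> cl C (\<Union>S)"
        using cl_min[OF inC] cl_sup[of "\<Union>S" C] calculation(1) by blast
      ultimately show "e \<in> cl C (\<Union>S)" by blast
    qed
    thus "consistent C (\<Union>F)" using inC unfolding consistent_def by blast
  qed
  ultimately have "\<Union>A \<in> C" using cu[unfolded closed_fin_compatible_unions_def, rule_format, of A] by blast
  moreover have "X \<subseteq> \<Union>A"
  proof
    fix e assume "e \<in> X"
    hence "cl C {e} \<in> A" unfolding A_def by auto
    thus "e \<in> \<Union>A" using cl_sup[of "{e}" C] by blast
  qed
  ultimately show ?thesis unfolding consistent_def by blast
qed

lemma part3:
  assumes ci: "closed_ne_inter C"
  shows "closed_fin_compatible_unions C \<longleftrightarrow> closed_fin_consistent_unions C"
proof
  assume cu: "closed_fin_compatible_unions C"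
  show "closed_fin_consistent_unions C" unfolding closed_fin_consistent_unions_def
  proof (intro allI impI, elim conjE)
    fix A assume AC: "A \<subseteq> C" and fc: "fin_consistent C (\<Union>A)"
    have "\<forall>F. F \<subseteq> A \<and> finite F \<longrightarrow> consistent C (\<Union>F)"
    proof (intro allI impI, elim conjE)
      fix F assume "F \<subseteq> A" "finite F"
      hence "\<Union>F \<subseteq> \<Union>A" by blast
      hence "fin_consistent C (\<Union>F)" using fc unfolding fin_consistent_def by (meson order_trans)
      thus "consistent C (\<Union>F)" using fc_consistent[OF ci cu] by blast
    qed
    thus "\<Union>A \<in> C" using cu[unfolded closed_fin_compatible_unions_def, rule_format, of A] AC by blast
  qed
next
  assume cu: "closed_fin_consistent_unions C"
  show "closed_fin_compatible_unions C" unfolding closed_fin_compatible_unions_def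
  proof (intro allI impI, elim conjE)
    fix A assume AC: "A \<subseteq> C" and H: "\<forall>F. F \<subseteq> A \<and> finite F \<longrightarrow> consistent C (\<Union>F)"
    have "fin_consistent C (\<Union>A)" unfolding fin_consistent_def
    proof (intro allI impI, elim conjE)
      fix Y assume "Y \<subseteq> \<Union>A" "finite Y"
      then obtain F where F: "F \<subseteq> A" "finite F" "Y \<subseteq> \<Union>F" using finite_cover[of Y A] by blast
      hence "consistent C (\<Union>F)" using H by blast
      thus "consistent C Y" using F(3) unfolding consistent_def by blast
    qed
    thus "\<Union>A \<in> C" using cu[unfolded closed_fin_consistent_unions_def, rule_format, of A] AC by blast
  qed
qed

lemma card_pair_le: "card {a,b} \<le> 2"
  by (simp add: card_insert_le_m1)

lemma part4:
  assumes ci: "closed_ne_inter C"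
  shows "coherent C \<longleftrightarrow> (rooted C \<and> closed_pw_consistent_unions C)"
proof
  assume co: "coherent C"
  have "\<Union>{} \<in> C" using co[unfolded coherent_def, rule_format, of "{}"] by simp
  hence r: "rooted C" unfolding rooted_def by simp
  have pwc: "consistent C X" if pw: "pw_consistent C X" for X
  proof -
    have single: "consistent C {e}" if "e \<in> X" for e
      using pw[unfolded pw_consistent_def, rule_format, of "{e}"] that by simp
    define A where "A = (\<lambda>e. cl C {e}) ` X"
    have "A \<subseteq> C" unfolding A_def using cl_in[OF ci] single by auto
    moreover have "\<forall>x\<in>A. \<forall>y\<in>A. consistent C (x \<union> y)"
    proof (intro ballI)
      fix x y assume "x \<in> A" "y \<in> A"
      then obtain a b where ab: "a \<in> X" "b \<in> X" "x = cl C {a}" "y = cl C {b}" unfolding A_def by auto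
      have "consistent C {a,b}" using pw[unfolded pw_consistent_def, rule_format, of "{a,b}"] ab card_pair_le[of a b] by simp
      then obtain z where z: "z \<in> C" "{a,b} \<subseteq> z" unfolding consistent_def by blast
      have "cl C {a} \<subseteq> z" "cl C {b} \<subseteq> z" using cl_min[OF z(1)] z(2) by auto
      hence "x \<union> y \<subseteq> z" using ab by simp
      with z show "consistent C (x \<union> y)" unfolding consistent_def by blast
    qed
    ultimately have "\<Union>A \<in> C" using co[unfolded coherent_def, rule_format, of A] by blast
    moreover have "X \<subseteq> \<Union>A" unfolding A_def using cl_sup[of _ C] by auto
    ultimately show ?thesis unfolding consistent_def by blast
  qed
  have "closed_pw_consistent_unions C" unfolding closed_pw_consistent_unions_def
  proof (intro allI impI, elim conjE)
    fix A assume AC: "A \<subseteq> C" and pw: "pw_consistent C (\<Union>A)"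
    have "\<forall>x\<in>A. \<forall>y\<in>A. consistent C (x \<union> y)"
    proof (intro ballI)
      fix x y assume "x \<in> A" "y \<in> A"
      hence "x \<union> y \<subseteq> \<Union>A" by blast
      hence "pw_consistent C (x \<union> y)" using pw unfolding pw_consistent_def by (meson order_trans)
      thus "consistent C (x \<union> y)" using pwc by blast
    qed
    thus "\<Union>A \<in> C" using co[unfolded coherent_def, rule_format, of A] AC by blast
  qed
  with r show "rooted C \<and> closed_pw_consistent_unions C" by blast
next
  assume "rooted C \<and> closed_pw_consistent_unions C"
  hence r: "{} \<in> C" and p: "closed_pw_consistent_unions C" unfolding rooted_def by auto
  show "coherent C" unfolding coherent_def
  proof (intro allI impI, elim conjE)
    fix A assume AC: "A \<subseteq> C" and H: "\<forall>x\<in>A. \<forall>y\<in>A. consistent C (x \<union> y)"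
    have "pw_consistent C (\<Union>A)" unfolding pw_consistent_def
    proof (intro allI impI, elim conjE)
      fix Y assume Y: "Y \<subseteq> \<Union>A" "finite Y" "card Y \<le> 2"
      from card2_cases[OF Y(2,3)] show "consistent C Y"
      proof (elim disjE exE)
        assume "Y = {}" thus ?thesis using r unfolding consistent_def by blast
      next
        fix a assume "Y = {a}" thus ?thesis using Y AC unfolding consistent_def by blast
      next
        fix a b assume Yab: "Y = {a,b}"
        then obtain x y where "x \<in> A" "y \<in> A" "a \<in> x" "b \<in> y" using Y by blast
        hence "consistent C (x \<union> y)" using H by blast
        thus ?thesis using Yab \<open>a \<in> x\<close> \<open>b \<in> y\<close> unfolding consistent_def by blast
      qed
    qed
    thus "\<Union>A \<in> C" using p[unfolded closed_pw_consistent_unions_def, rule_format, of A] AC by blast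
  qed
qed

theorem mainTheorem14:
  fixes E :: "'e set" and C :: "'e set set"
  assumes "config_structure E C"
    and "closed_ne_inter C"
  shows "(closed_directed_unions C \<longleftrightarrow> finite_conflict E C) \<and>
         (weakly_coherent C \<longleftrightarrow> (rooted C \<and> binary_conflict E C)) \<and>
         (closed_fin_compatible_unions C \<longleftrightarrow> closed_fin_consistent_unions C) \<and>
         (coherent C \<longleftrightarrow> (rooted C \<and> closed_pw_consistent_unions C))"
  using part1[OF assms] part2[OF assms] part3[OF assms(2)] part4[OF assms(2)] by blast

end
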